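(* Let $\mathcal{D}=\{(\mathbf{x}_1,y_1),\ldots,(\mathbf{x}_n,y_n)\}$ with $n\ge 2$, $\mathbf{x}_i\in\mathbb{R}^d$, and let $\mathcal{D}'=\mathcal{D}\setminus\{(\mathbf{x}_n,y_n)\}$. Let $\ell(\mathbf{w}^\top\mathbf{x},y)$ be a convex loss, differentiable everywhere and twice differentiable in its first argument, and let $\lambda>0$. Define $$L(\mathbf{w};\mathcal{D})=\sum_{i=1}^n \ell(\mathbf{w}^\top\mathbf{x}_i,y_i)+\frac{\lambda n}{2}\|\mathbf{w}\|_2^2,\qquad L(\mathbf{w};\mathcal{D}')=\sum_{i=1}^{n-1} \ell(\mathbf{w}^\top\mathbf{x}_i,y_i)+\frac{\lambda (n-1)}{2}\|\mathbf{w}\|_2^2,$$ let $\mathbf{w}^*=\arg\min_{\mathbf{w}} L(\mathbf{w};\mathcal{D})$, $\Delta=\lambda\mathbf{w}^*+\nabla\ell((\mathbf{w}^* )^\top\mathbf{x}_n,y_n)$, $H_{\mathbf{w}}=\nabla^2 L(\mathbf{w};\mathcal{D}')$, and $\mathbf{w}^-=\mathbf{w}^*+H_{\mathbf{w}^*}^{-1}\Delta$. Suppose that for all $(\mathbf{x}_i,y_i)\in\mathcal{D}$ and all $\mathbf{w}\in\mathbb{R}^d$, $\|\nabla\ell(\mathbf{w}^\top\mathbf{x}_i,y_i)\|_2\le C$; suppose also that $\ell''$ is $\gamma$-Lipschitz and $\|\mathbf{x}_i\|_2\le 1$ for all $(\mathbf{x}_i,y_i)\in\mathcal{D}$. Then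 $$\|\nabla L(\mathbf{w}^-;\mathcal{D}')\|_2=\|(H_{\mathbf{w}_\eta}-H_{\mathbf{w}^*})H_{\mathbf{w}^*}^{-1}\Delta\|_2\le \gamma(n-1)\|H_{\mathbf{w}^*}^{-1}\Delta\|_2^2\le\frac{4\gamma C^2}{\lambda^2(n-1)},$$ where $H_{\mathbf{w}_\eta}$ is the Hessian of $L(\cdot;\mathcal{D}')$ at $\mathbf{w}_\eta=\mathbf{w}^*+\eta H_{\mathbf{w}^*}^{-1}\Delta$ for some $\eta\in[0,1]$.
   Context: Gradients $\nabla\ell(\mathbf{w}^\top\mathbf{x},y)$ and Hessians are taken with respect to $\mathbf{w}$; $\ell''$ denotes the second derivative of $\ell$ with respect to its first (scalar) argument. $\mathbf{w}^-$ is called the Newton update removal of the point $(\mathbf{x}_n,y_n)$. *)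

theory Defs
  imports "HOL-Analysis.Analysis"
begin

definition grad :: "(real^'d \<Rightarrow> real) \<Rightarrow> real^'d \<Rightarrow> real^'d" where
  "grad f w = (THE g. GDERIV f w :> g)"

definition hess :: "(real^'d \<Rightarrow> real) \<Rightarrow> real^'d \<Rightarrow> real^'d^'d" where
  "hess f w = (\<chi> i. grad (\<lambda>v. grad f v $ i) w)"

definition Lreg :: "(real \<Rightarrow> 'y \<Rightarrow> real) \<Rightarrow> real \<Rightarrow> (nat \<Rightarrow> real^'d) \<Rightarrow> (nat \<Rightarrow> 'y)
                     \<Rightarrow> nat \<Rightarrow> real^'d \<Rightarrow> real" where
  "Lreg l lam x y m w = (\<Sum>i=1..m. l (w \<bullet> x i) (y i)) + lam * real m / 2 * (norm w)^2"

end

theory Submission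
  imports Defs
begin

lemma grad_eqI:
  assumes "GDERIV f w :> g" shows "grad f w = g"
proof -
  have u: "g' = g" if "GDERIV f w :> g'" for g'
  proof -
    have "(\<lambda>h. h \<bullet> g') = (\<lambda>h. h \<bullet> g)"
      using has_derivative_unique that assms unfolding gderiv_def by blast
    hence "(g' - g) \<bullet> g' = (g' - g) \<bullet> g" by metis
    hence "(g' - g) \<bullet> (g' - g) = 0" by (simp add: inner_diff_right)
    thus ?thesis by simp
  qed
  show ?thesis unfolding grad_def using assms u by (rule the_equality)
qed

lemma gderiv_lin:
  fixes a :: "'a::real_inner"
  assumes "(f has_real_derivative f') (at (w \<bullet> a))"
  shows "GDERIV (\<lambda>v. f (v \<bullet> a)) w :> f' *\<^sub>R a"
proof -
  have "GDERIV (\<lambda>v. v \<bullet> a) w :> a"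
    unfolding gderiv_def by (auto intro!: derivative_eq_intros)
  from GDERIV_DERIV_compose[OF this assms] show ?thesis .
qed

lemma gderiv_sum:
  assumes "\<And>i. i \<in> S \<Longrightarrow> GDERIV (f i) w :> g i"
  shows "GDERIV (\<lambda>v. \<Sum>i\<in>S. f i v) w :> (\<Sum>i\<in>S. g i)"
  using assms unfolding gderiv_def inner_sum_right
  by (rule has_derivative_sum)

lemma gderiv_cnormsq:
  "GDERIV (\<lambda>v. c * (norm v)^2) w :> (2*c) *\<^sub>R w"
proof -
  have "((\<lambda>v. c * (v \<bullet> v)) has_derivative (\<lambda>h. c * (h \<bullet> w + w \<bullet> h))) (at w)"
    by (auto intro!: derivative_eq_intros)
  moreover have "(\<lambda>h. c * (h \<bullet> w + w \<bullet> h)) = (\<lambda>h. h \<bullet> ((2*c) *\<^sub>R w))"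
    by (auto simp: inner_commute algebra_simps)
  ultimately show ?thesis unfolding gderiv_def power2_norm_eq_inner by simp
qed

lemma gderiv_Lreg:
  assumes "\<And>b t. ((\<lambda>s. l s b) has_real_derivative l1 b t) (at t)"
  shows "GDERIV (Lreg l lam x y m) w :>
     (\<Sum>i=1..m. l1 (y i) (w \<bullet> x i) *\<^sub>R x i) + (lam * real m) *\<^sub>R w"
proof -
  have "GDERIV (\<lambda>v. (\<Sum>i=1..m. l (v \<bullet> x i) (y i)) + lam * real m / 2 * (norm v)^2) w :>
     (\<Sum>i=1..m. l1 (y i) (w \<bullet> x i) *\<^sub>R x i) + (2 * (lam * real m / 2)) *\<^sub>R w"
    by (intro GDERIV_add gderiv_sum gderiv_lin gderiv_cnormsq assms)
  thus ?thesis unfolding Lreg_def[abs_def] by simp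
qed

lemma grad_Lreg:
  assumes "\<And>b t. ((\<lambda>s. l s b) has_real_derivative l1 b t) (at t)"
  shows "grad (Lreg l lam x y m) w =
     (\<Sum>i=1..m. l1 (y i) (w \<bullet> x i) *\<^sub>R x i) + (lam * real m) *\<^sub>R w"
  by (rule grad_eqI[OF gderiv_Lreg[OF assms]])

lemma hess_Lreg:
  fixes x :: "nat \<Rightarrow> real^'d"
  assumes d1: "\<And>b t. ((\<lambda>s. l s b) has_real_derivative l1 b t) (at t)"
    and d2: "\<And>b t. (l1 b has_real_derivative l2 b t) (at t)"
  shows "hess (Lreg l lam x y m) w =
     (\<chi> j. (\<Sum>i=1..m. (l2 (y i) (w \<bullet> x i) * x i $ j) *\<^sub>R x i) + (lam * real m) *\<^sub>R axis j 1)"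
proof -
  have "grad (\<lambda>v. grad (Lreg l lam x y m) v $ j) w =
     (\<Sum>i=1..m. (l2 (y i) (w \<bullet> x i) * x i $ j) *\<^sub>R x i) + (lam * real m) *\<^sub>R axis j 1" for j
  proof -
    have e: "(\<lambda>v. grad (Lreg l lam x y m) v $ j) =
       (\<lambda>v. (\<Sum>i=1..m. (\<lambda>t. l1 (y i) t * x i $ j) (v \<bullet> x i)) + (lam * real m) * (v \<bullet> axis j 1))"
      by (simp add: grad_Lreg[OF d1] inner_axis)
    have "GDERIV (\<lambda>v. (\<Sum>i=1..m. (\<lambda>t. l1 (y i) t * x i $ j) (v \<bullet> x i)) + (lam * real m) * (v \<bullet> axis j 1)) w :>
       (\<Sum>i=1..m. (l2 (y i) (w \<bullet> x i) * x i $ j) *\<^sub>R x i) + (lam * real m) *\<^sub>R axis j 1"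
    proof (rule GDERIV_add)
      show "GDERIV (\<lambda>v. \<Sum>i=1..m. (\<lambda>t. l1 (y i) t * x i $ j) (v \<bullet> x i)) w :>
          (\<Sum>i=1..m. (l2 (y i) (w \<bullet> x i) * x i $ j) *\<^sub>R x i)"
        by (intro gderiv_sum gderiv_lin) (auto intro!: derivative_eq_intros d2)
      show "GDERIV (\<lambda>v. lam * real m * (v \<bullet> axis j 1)) w :> (lam * real m) *\<^sub>R axis j 1"
        unfolding gderiv_def by (auto intro!: derivative_eq_intros simp: algebra_simps)
    qed
    thus ?thesis unfolding e by (rule grad_eqI)
  qed
  thus ?thesis unfolding hess_def by simp
qed


definition HV :: "('y \<Rightarrow> real \<Rightarrow> real) \<Rightarrow> real \<Rightarrow> (nat \<Rightarrow> real^'d) \<Rightarrow> (nat \<Rightarrow> 'y) \<Rightarrow> nat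
   \<Rightarrow> real^'d \<Rightarrow> real^'d \<Rightarrow> real^'d" where
  "HV l2 lam x y m w u = (\<Sum>i=1..m. (l2 (y i) (w \<bullet> x i) * (x i \<bullet> u)) *\<^sub>R x i) + (lam * real m) *\<^sub>R u"

lemma hmat_mult:
  fixes x :: "nat \<Rightarrow> real^'d"
  shows "(\<chi> j. (\<Sum>i=1..m. (l2 (y i) (w \<bullet> x i) * x i $ j) *\<^sub>R x i) + (lam * real m) *\<^sub>R axis j 1) *v u
    = HV l2 lam x y m w u"
proof -
  have *: "(A *v u) $ j = A $ j \<bullet> u" for A :: "real^'d^'d" and j
    by (simp add: matrix_vector_mult_def inner_vec_def mult.commute)
  hence "(M *v u) $ j = M $ j \<bullet> u" for M :: "real^'d^'d" and j by blast
  show ?thesis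
    by (simp add: vec_eq_iff HV_def inner_add_left inner_sum_left inner_axis' * sum_component
       mult.commute mult.left_commute)
qed

lemma deriv2_nonneg:
  fixes f :: "real \<Rightarrow> real"
  assumes cvx: "convex_on UNIV f"
    and d1: "\<And>t. (f has_real_derivative f1 t) (at t)"
    and d2: "(f1 has_real_derivative f2) (at t)"
  shows "f2 \<ge> 0"
proof (rule ccontr)
  assume "\<not> f2 \<ge> 0"
  hence "f2 < 0" by simp
  from DERIV_neg_dec_right[OF d2 this] obtain d where d: "d > 0" "\<And>h. h > 0 \<Longrightarrow> h < d \<Longrightarrow> f1 t > f1 (t + h)"
    by blast
  have tan: "f b - f a \<ge> f1 a * (b - a)" for a b
    using convex_on_imp_above_tangent[OF cvx, of a b "f1 a"] d1[of a] by simp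
  have "f1 t \<le> f1 (t + d/2)"
  proof -
    have "f (t + d/2) - f t \<ge> f1 t * (d/2)" using tan[of t "t + d/2"] by simp
    moreover have "f t - f (t + d/2) \<ge> f1 (t + d/2) * (- d/2)" using tan[of "t+d/2" t] by simp
    ultimately have "(f1 (t + d/2) - f1 t) * (d/2) \<ge> 0" by (simp add: algebra_simps)
    thus ?thesis using d(1) by (simp add: zero_le_mult_iff)
  qed
  moreover have "f1 t > f1 (t + d/2)" using d by simp
  ultimately show False by simp
qed

lemma HV_quad:
  assumes "\<And>b s. l2 b s \<ge> 0" "lam \<ge> 0"
  shows "u \<bullet> HV l2 lam x y m w u \<ge> lam * real m * (norm u)^2"
proof -
  have "u \<bullet> HV l2 lam x y m w u = (\<Sum>i=1..m. l2 (y i) (w \<bullet> x i) * (x i \<bullet> u)^2) + lam * real m * (u \<bullet> u)"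
    by (simp add: HV_def inner_add_right inner_sum_right power2_eq_square inner_commute mult.assoc)
  moreover have "(\<Sum>i=1..m. l2 (y i) (w \<bullet> x i) * (x i \<bullet> u)^2) \<ge> 0"
    using assms by (intro sum_nonneg) simp
  ultimately show ?thesis by (simp add: power2_norm_eq_inner)
qed

lemma inv_solve:
  fixes A :: "real^'d^'d"
  assumes "\<And>v. A *v v = 0 \<Longrightarrow> v = 0"
  shows "A *v (matrix_inv A *v z) = z"
proof -
  obtain B where "B ** A = mat 1" using matrix_left_invertible_ker assms by blast
  hence "A ** B = mat 1" using matrix_left_right_inverse by blast
  with \<open>B ** A = mat 1\<close> have "\<exists>A'. A ** A' = mat 1 \<and> A' ** A = mat 1" by blast
  hence "A ** matrix_inv A = mat 1 \<and> matrix_inv A ** A = mat 1"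
    unfolding matrix_inv_def by (rule someI_ex)
  thus ?thesis by (simp add: matrix_vector_mul_assoc)
qed


lemma term_vderiv:
  assumes d2: "\<And>s. (f1 has_real_derivative f2 s) (at s)"
  shows "((\<lambda>t. f1 ((w + t *\<^sub>R u) \<bullet> a) *\<^sub>R a) has_vector_derivative
          (f2 ((w + t *\<^sub>R u) \<bullet> a) * (a \<bullet> u)) *\<^sub>R a) (at t)"
proof -
  have e: "(\<lambda>t. (w + t *\<^sub>R u) \<bullet> a) = (\<lambda>t. w \<bullet> a + t * (u \<bullet> a))"
    by (simp add: inner_add_left)
  have "((\<lambda>t. (w + t *\<^sub>R u) \<bullet> a) has_real_derivative (a \<bullet> u)) (at t)"
    unfolding e by (auto intro!: derivative_eq_intros simp: inner_commute)
  from DERIV_chain2[OF d2 this]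
  have "((\<lambda>t. f1 ((w + t *\<^sub>R u) \<bullet> a)) has_real_derivative f2 ((w + t *\<^sub>R u) \<bullet> a) * (a \<bullet> u)) (at t)" .
  thus ?thesis
    by (auto intro!: derivative_eq_intros simp: has_real_derivative_iff_has_vector_derivative)
qed


theorem theorem1:
  fixes l :: "real \<Rightarrow> 'y \<Rightarrow> real"
    and x :: "nat \<Rightarrow> real^'d" and y :: "nat \<Rightarrow> 'y"
    and n :: nat and lam C \<gamma> :: real and wstar :: "real^'d"
  assumes n2: "n \<ge> 2"
    and lam_pos: "lam > 0"
    and convex: "\<And>b. convex_on UNIV (\<lambda>t. l t b)"
    and diff1: "\<And>b t. (\<lambda>s. l s b) differentiable (at t)"
    and diff2: "\<And>b t. deriv (\<lambda>s. l s b) differentiable (at t)"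
    and wstar_min: "\<And>w. Lreg l lam x y n wstar \<le> Lreg l lam x y n w"
    and grad_bound: "\<And>i w. i \<in> {1..n} \<Longrightarrow> norm (grad (\<lambda>v. l (v \<bullet> x i) (y i)) w) \<le> C"
    and lip: "\<And>b. \<gamma>-lipschitz_on UNIV (deriv (deriv (\<lambda>s. l s b)))"
    and xnorm: "\<And>i. i \<in> {1..n} \<Longrightarrow> norm (x i) \<le> 1"
  shows
    "let L' = Lreg l lam x y (n - 1);
         H = hess L';
         \<Delta> = lam *\<^sub>R wstar + grad (\<lambda>v. l (v \<bullet> x n) (y n)) wstar;
         u = matrix_inv (H wstar) *v \<Delta>;
         wminus = wstar + u
     in \<exists>\<eta>\<in>{0..1}.
          norm (grad L' wminus) = norm ((H (wstar + \<eta> *\<^sub>R u) - H wstar) *v u)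
        \<and> norm ((H (wstar + \<eta> *\<^sub>R u) - H wstar) *v u) \<le> \<gamma> * real (n - 1) * (norm u)^2
        \<and> \<gamma> * real (n - 1) * (norm u)^2 \<le> 4 * \<gamma> * C^2 / (lam^2 * real (n - 1))"
proof -
  define l1 where "l1 = (\<lambda>b. deriv (\<lambda>s. l s b))"
  define l2 where "l2 = (\<lambda>b. deriv (l1 b))"
  have d1: "((\<lambda>s. l s b) has_real_derivative l1 b t) (at t)" for b t
    unfolding l1_def using diff1 DERIV_deriv_iff_real_differentiable by blast
  have d2: "(l1 b has_real_derivative l2 b t) (at t)" for b t
    unfolding l2_def l1_def using diff2 DERIV_deriv_iff_real_differentiable by blast
  have l2nn: "l2 b t \<ge> 0" for b t
    by (rule deriv2_nonneg[OF convex d1 d2])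
  have lip2: "\<gamma>-lipschitz_on UNIV (l2 b)" for b
    unfolding l2_def l1_def by (rule lip)
  have gam: "\<gamma> \<ge> 0" using lipschitz_on_nonneg[OF lip2] .
  have l2c: "continuous_on S (\<lambda>t. l2 b (f t))" if "continuous_on S f" for b f and S :: "real set"
    using continuous_on_compose2[OF lipschitz_on_continuous_on[OF lip2[of b]] that] by simp
  have gi: "grad (\<lambda>v. l (v \<bullet> x i) (y i)) w = l1 (y i) (w \<bullet> x i) *\<^sub>R x i" for i w
    by (rule grad_eqI[OF gderiv_lin[OF d1]])
  have gib: "norm (l1 (y i) (w \<bullet> x i) *\<^sub>R x i) \<le> C" if "i \<in> {1..n}" for i w
    using grad_bound[OF that, of w] gi by simp
  have C0: "C \<ge> 0"
  proof -
    have "(1::nat) \<in> {1..n}" using n2 by simp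
    from gib[OF this, of 0] show ?thesis using norm_ge_zero order_trans by blast
  qed
  define m where "m = n - 1"
  have nm: "n = Suc m" and m1: "m \<ge> 1" using n2 unfolding m_def by auto
  define G' where "G' w = (\<Sum>i=1..m. l1 (y i) (w \<bullet> x i) *\<^sub>R x i) + (lam * real m) *\<^sub>R w" for w
  define L' where "L' = Lreg l lam x y m"
  have gL': "grad L' w = G' w" for w unfolding L'_def G'_def by (rule grad_Lreg[OF d1])
  define Hm where "Hm w = (\<chi> j. (\<Sum>i=1..m. (l2 (y i) (w \<bullet> x i) * x i $ j) *\<^sub>R x i) + (lam * real m) *\<^sub>R axis j 1)" for w
  have hL': "hess L' w = Hm w" for w unfolding L'_def Hm_def by (rule hess_Lreg[OF d1 d2])
  have Hmv: "Hm w *v v = HV l2 lam x y m w v" for w v unfolding Hm_def by (rule hmat_mult)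
  define \<Delta> where "\<Delta> = lam *\<^sub>R wstar + l1 (y n) (wstar \<bullet> x n) *\<^sub>R x n"
  define u where "u = matrix_inv (Hm wstar) *v \<Delta>"
  have G0: "(\<Sum>i=1..n. l1 (y i) (wstar \<bullet> x i) *\<^sub>R x i) + (lam * real n) *\<^sub>R wstar = 0"
  proof -
    let ?G = "(\<Sum>i=1..n. l1 (y i) (wstar \<bullet> x i) *\<^sub>R x i) + (lam * real n) *\<^sub>R wstar"
    have "((Lreg l lam x y n) has_derivative (\<lambda>h. h \<bullet> ?G)) (at wstar)"
      using gderiv_Lreg[OF d1] unfolding gderiv_def .
    from differential_zero_maxmin[OF _ open_UNIV this] wstar_min
    have "(\<lambda>h. h \<bullet> ?G) = (\<lambda>v. 0)" by blast
    hence "?G \<bullet> ?G = 0" by metis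
    thus ?thesis by simp
  qed
  have G'w: "G' wstar = - \<Delta>"
  proof -
    have "(\<Sum>i=1..n. l1 (y i) (wstar \<bullet> x i) *\<^sub>R x i) = (\<Sum>i=1..m. l1 (y i) (wstar \<bullet> x i) *\<^sub>R x i) + l1 (y n) (wstar \<bullet> x n) *\<^sub>R x n"
      unfolding nm by (simp add: sum.cl_ivl_Suc)
    with G0 have "G' wstar + \<Delta> = 0" unfolding G'_def \<Delta>_def nm by (simp add: algebra_simps)
    thus ?thesis by (simp add: eq_neg_iff_add_eq_0)
  qed
  have quad: "v \<bullet> HV l2 lam x y m w v \<ge> lam * real m * (norm v)^2" for w v
    using HV_quad[of l2 lam] l2nn lam_pos by simp
  have Hu: "HV l2 lam x y m wstar u = \<Delta>"
  proof -
    have "v = 0" if "Hm wstar *v v = 0" for v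
    proof -
      have "lam * real m * (norm v)^2 \<le> 0" using quad[of v wstar] that Hmv by simp
      moreover have "lam * real m > 0" using lam_pos m1 by simp
      ultimately have "\<not> (norm v)^2 > 0"
        by (metis less_le_not_le mult_pos_pos)
      thus ?thesis by simp
    qed
    from inv_solve[of "Hm wstar", OF this] show ?thesis unfolding u_def Hmv by blast
  qed
  have wsb: "lam * norm wstar \<le> C"
  proof -
    have "(lam * real n) *\<^sub>R wstar = - (\<Sum>i=1..n. l1 (y i) (wstar \<bullet> x i) *\<^sub>R x i)"
      using G0 by (simp add: eq_neg_iff_add_eq_0 add.commute)
    hence "lam * real n * norm wstar = norm (\<Sum>i=1..n. l1 (y i) (wstar \<bullet> x i) *\<^sub>R x i)"
    proof -
      have "norm ((lam * real n) *\<^sub>R wstar) = lam * real n * norm wstar" using lam_pos by simp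
      thus ?thesis using \<open>(lam * real n) *\<^sub>R wstar = _\<close> by (metis norm_minus_cancel)
    qed
    also have "\<dots> \<le> (\<Sum>i=1..n. norm (l1 (y i) (wstar \<bullet> x i) *\<^sub>R x i))" by (rule norm_sum)
    also have "\<dots> \<le> (\<Sum>i=1..n. C)" by (intro sum_mono gib) 
    also have "\<dots> = real n * C" by simp
    finally have "real n * (lam * norm wstar) \<le> real n * C" by (simp add: algebra_simps)
    thus ?thesis using n2 by simp
  qed
  have Db: "norm \<Delta> \<le> 2 * C"
  proof -
    have "norm \<Delta> \<le> norm (lam *\<^sub>R wstar) + norm (l1 (y n) (wstar \<bullet> x n) *\<^sub>R x n)"
      unfolding \<Delta>_def by (rule norm_triangle_ineq)
    also have "\<dots> \<le> C + C" using wsb gib[of n wstar] lam_pos n2 by simp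
    finally show ?thesis by simp
  qed
  have ub: "lam * real m * norm u \<le> 2 * C"
  proof (cases "u = 0")
    case True thus ?thesis using C0 by simp
  next
    case False
    have "lam * real m * (norm u)^2 \<le> u \<bullet> \<Delta>" using quad[of u wstar] Hu by simp
    also have "\<dots> \<le> norm u * norm \<Delta>" by (rule norm_cauchy_schwarz)
    also have "\<dots> \<le> norm u * (2 * C)" using Db by (simp add: mult_left_mono)
    finally have "norm u * (lam * real m * norm u) \<le> norm u * (2 * C)" by (simp add: power2_eq_square algebra_simps)
    thus ?thesis using False by simp
  qed
  have step3: "\<gamma> * real m * (norm u)^2 \<le> 4 * \<gamma> * C^2 / (lam^2 * real m)"
  proof -
    have lm: "lam * real m > 0" using lam_pos m1 by simp
    have "(lam * real m * norm u)^2 \<le> (2 * C)^2" using ub lm by (intro power_mono) auto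
    hence "(lam * real m)^2 * (norm u)^2 \<le> 4 * C^2" by (simp add: power_mult_distrib)
    moreover have "(lam * real m)^2 > 0" using lm by (intro zero_less_power) 
    ultimately have "(norm u)^2 \<le> 4 * C^2 / (lam * real m)^2"
      by (simp add: pos_le_divide_eq mult.commute)
    hence "\<gamma> * real m * (norm u)^2 \<le> \<gamma> * real m * (4 * C^2 / (lam * real m)^2)"
      using gam by (intro mult_left_mono) auto
    also have "\<dots> = 4 * \<gamma> * C^2 / (lam^2 * real m)" using lm by (simp add: field_simps power2_eq_square)
    finally show ?thesis .
  qed
  have step2: "norm (HV l2 lam x y m (wstar + t *\<^sub>R u) u - HV l2 lam x y m wstar u) \<le> \<gamma> * real m * (norm u)^2"
    if t: "0 \<le> t" "t \<le> 1" for t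
  proof -
    let ?a = "wstar + t *\<^sub>R u"
    have "HV l2 lam x y m ?a u - HV l2 lam x y m wstar u =
      (\<Sum>i=1..m. ((l2 (y i) (?a \<bullet> x i) - l2 (y i) (wstar \<bullet> x i)) * (x i \<bullet> u)) *\<^sub>R x i)"
      by (simp add: HV_def sum_subtractf[symmetric] scaleR_diff_left left_diff_distrib)
    also have "norm \<dots> \<le> (\<Sum>i=1..m. norm (((l2 (y i) (?a \<bullet> x i) - l2 (y i) (wstar \<bullet> x i)) * (x i \<bullet> u)) *\<^sub>R x i))"
      by (rule norm_sum)
    also have "\<dots> \<le> (\<Sum>i=1..m. \<gamma> * (norm u)^2)"
    proof (rule sum_mono)
      fix i assume i: "i \<in> {1..m}"
      hence xi: "norm (x i) \<le> 1" using xnorm nm by simp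
      have xu: "\<bar>x i \<bullet> u\<bar> \<le> norm u"
        using Cauchy_Schwarz_ineq2[of "x i" u] xi mult_right_mono[OF xi norm_ge_zero[of u]] by simp
      have "\<bar>l2 (y i) (?a \<bullet> x i) - l2 (y i) (wstar \<bullet> x i)\<bar> \<le> \<gamma> * \<bar>?a \<bullet> x i - wstar \<bullet> x i\<bar>"
        using lipschitz_onD[OF lip2[of "y i"], of "?a \<bullet> x i" "wstar \<bullet> x i"] by (simp add: dist_real_def)
      also have "\<bar>?a \<bullet> x i - wstar \<bullet> x i\<bar> = t * \<bar>x i \<bullet> u\<bar>"
      proof -
        have "?a \<bullet> x i - wstar \<bullet> x i = t * (x i \<bullet> u)" by (simp add: inner_add_left inner_commute[of u "x i"])
        thus ?thesis using t by (simp add: abs_mult)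
      qed
      also have "\<gamma> * (t * \<bar>x i \<bullet> u\<bar>) \<le> \<gamma> * norm u"
      proof -
        have "t * \<bar>x i \<bullet> u\<bar> \<le> 1 * norm u" using t xu by (intro mult_mono) auto
        thus ?thesis using gam by (simp add: mult_left_mono)
      qed
      finally have c: "\<bar>l2 (y i) (?a \<bullet> x i) - l2 (y i) (wstar \<bullet> x i)\<bar> \<le> \<gamma> * norm u" .
      have "norm (((l2 (y i) (?a \<bullet> x i) - l2 (y i) (wstar \<bullet> x i)) * (x i \<bullet> u)) *\<^sub>R x i)
          = \<bar>l2 (y i) (?a \<bullet> x i) - l2 (y i) (wstar \<bullet> x i)\<bar> * \<bar>x i \<bullet> u\<bar> * norm (x i)"
        by (simp add: abs_mult)
      also have "\<dots> \<le> (\<gamma> * norm u) * norm u * 1"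
        using c xu xi gam by (intro mult_mono) auto
      finally show "norm (((l2 (y i) (?a \<bullet> x i) - l2 (y i) (wstar \<bullet> x i)) * (x i \<bullet> u)) *\<^sub>R x i) \<le> \<gamma> * (norm u)^2"
        by (simp add: power2_eq_square mult.assoc)
    qed
    also have "\<dots> = \<gamma> * real m * (norm u)^2" by simp
    finally show ?thesis .
  qed
  define g where "g t = G' (wstar + t *\<^sub>R u) - t *\<^sub>R \<Delta>" for t
  define D where "D t = HV l2 lam x y m (wstar + t *\<^sub>R u) u - \<Delta>" for t
  have gd: "(g has_vector_derivative D t) (at t)" for t
  proof -
    have s: "((\<lambda>t. \<Sum>i=1..m. l1 (y i) ((wstar + t *\<^sub>R u) \<bullet> x i) *\<^sub>R x i) has_vector_derivative
        (\<Sum>i=1..m. (l2 (y i) ((wstar + t *\<^sub>R u) \<bullet> x i) * (x i \<bullet> u)) *\<^sub>R x i)) (at t)"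
      by (intro has_vector_derivative_sum term_vderiv d2)
    have r: "((\<lambda>t. (lam * real m) *\<^sub>R (wstar + t *\<^sub>R u) - t *\<^sub>R \<Delta>) has_vector_derivative
        (lam * real m) *\<^sub>R u - \<Delta>) (at t)"
      by (auto intro!: derivative_eq_intros)
    from has_vector_derivative_add[OF s r] show ?thesis
      unfolding g_def D_def G'_def HV_def by (simp add: algebra_simps)
  qed
  have gc: "continuous_on {0..1} g"
    using gd by (meson continuous_at_imp_continuous_on has_vector_derivative_continuous)
  obtain \<eta> where eta: "\<eta> \<in> {0<..<1}" and mv: "norm (g 1 - g 0) \<le> norm (1 *\<^sub>R D \<eta>)"
    using mvt_general[of 0 1 g "\<lambda>t h. h *\<^sub>R D t", OF _ gc] gd
    unfolding has_vector_derivative_def by auto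
  have g10: "g 1 - g 0 = G' (wstar + u)" unfolding g_def using G'w by simp
  have Deta: "D \<eta> = HV l2 lam x y m (wstar + \<eta> *\<^sub>R u) u - HV l2 lam x y m wstar u"
    unfolding D_def Hu ..
  define \<phi> where "\<phi> t = norm (HV l2 lam x y m (wstar + t *\<^sub>R u) u - HV l2 lam x y m wstar u)" for t
  have \<phi>c: "continuous_on {0..\<eta>} \<phi>"
    unfolding \<phi>_def HV_def by (intro continuous_intros l2c)
  have "\<phi> 0 \<le> norm (G' (wstar + u))" "norm (G' (wstar + u)) \<le> \<phi> \<eta>"
    using mv g10 Deta unfolding \<phi>_def by auto
  from IVT'[OF this _ \<phi>c] eta obtain t where t: "0 \<le> t" "t \<le> \<eta>" "\<phi> t = norm (G' (wstar + u))"
    by auto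
  have t1: "t \<le> 1" using t eta by simp
  have hessEq: "hess L' = Hm" by (rule ext) (rule hL')
  show ?thesis
    unfolding Let_def m_def[symmetric] L'_def[symmetric] hessEq gi \<Delta>_def[symmetric] u_def[symmetric]
      gL' matrix_vector_mult_diff_rdistrib Hmv
  proof (intro bexI[of _ t] conjI)
    show "t \<in> {0..1}" using t t1 by simp
    show "norm (G' (wstar + u)) = norm (HV l2 lam x y m (wstar + t *\<^sub>R u) u - HV l2 lam x y m wstar u)"
      using t(3) unfolding \<phi>_def by simp
    show "norm (HV l2 lam x y m (wstar + t *\<^sub>R u) u - HV l2 lam x y m wstar u) \<le> \<gamma> * real m * (norm u)^2"
      using step2 t t1 by simp
    show "\<gamma> * real m * (norm u)^2 \<le> 4 * \<gamma> * C^2 / (lam^2 * real m)" by (rule step3)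
  qed
qed

end
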